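(* There is an absolute constant $C$ such that for all positive integers $n$, $$M_{\mathrm{Schur}}(n,3)\le \frac{n^2}{67}+Cn \qquad\text{and}\qquad M_{\mathrm{Schur}}(n,4)\le \frac{n^2}{496}+Cn .$$ (The bound for 3 colors is attained, up to $O(n)$, by the coloring that colors consecutive blocks of $[n]$ of lengths $\frac{10n}{67},\frac{14n}{67},\frac{2n}{67},\frac{28n}{67},\frac{n}{67},\frac{11n}{67},\frac{n}{67}$ with colors $0,1,0,2,0,1,0$ respectively; the bound for 4 colors by consecutive blocks of lengths $\frac{e_i n}{496}$ with $(e_i)=(28,38,5,75,2,30,2,182,1,29,1,72,1,29,1)$ and colors $0,1,0,2,0,1,0,3,0,1,0,2,0,1,0$.)
   Context: For a positive integer $n$ write $[n]=\{1,\dots,n\}$. A $k$-coloring of $[n]$ is a map $\chi:[n]\to\{0,\dots,k-1\}$. A Schur triple is an ordered triple $(x,y,z)\in[n]^3$ with $x+y=z$ (so $(x,y,z)$ and $(y,x,z)$ with $x\neq y$ are counted separately); it is monochromatic if $\chi(x)=\chi(y)=\chi(z)$. $M_{\mathrm{Schur}}(n,k)$ is the minimum over all $k$-colorings of $[n]$ of the number of monochromatic Schur triples. *)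

theory Defs
  imports Complex_Main
begin

definition is_coloring :: "nat \<Rightarrow> nat \<Rightarrow> (nat \<Rightarrow> nat) \<Rightarrow> bool" where
  "is_coloring n k chi \<longleftrightarrow> (\<forall>x\<in>{1..n}. chi x < k)"

definition mono_schur_count :: "nat \<Rightarrow> (nat \<Rightarrow> nat) \<Rightarrow> nat" where
  "mono_schur_count n chi = card {(x, y, z). x \<in> {1..n} \<and> y \<in> {1..n} \<and> z \<in> {1..n}
      \<and> x + y = z \<and> chi x = chi y \<and> chi y = chi z}"

definition M_Schur :: "nat \<Rightarrow> nat \<Rightarrow> nat" where
  "M_Schur n k = (LEAST m. \<exists>chi. is_coloring n k chi \<and> mono_schur_count n chi = m)"

end

theory Submission
  imports Defs
begin

fun cnt :: "nat \<Rightarrow> nat list \<Rightarrow> nat list \<Rightarrow> nat" where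
  "cnt c (u#us) (v#vs) = (if u = c \<and> v = c then 1 else 0) + cnt c us vs"
| "cnt c _ _ = 0"

fun go :: "nat list \<Rightarrow> nat list \<Rightarrow> nat" where
  "go full [] = 0"
| "go full (x#rest) = cnt x full (x#rest) + cnt x full rest + go full rest"

definition gl3 :: "nat list" where "gl3 = [0, 0, 0, 0, 0, 0, 0, 0, 0, 0, 1, 1, 1, 1, 1, 1, 1, 1, 1, 1, 1, 1, 1, 1, 0, 0, 2, 2, 2, 2, 2, 2, 2, 2, 2, 2, 2, 2, 2, 2, 2, 2, 2, 2, 2, 2, 2, 2, 2, 2, 2, 2, 2, 2, 0, 1, 1, 1, 1, 1, 1, 1, 1, 1, 1, 1, 0]"

definition gl4 :: "nat list" where "gl4 = [0, 0, 0, 0, 0, 0, 0, 0, 0, 0, 0, 0, 0, 0, 0, 0, 0, 0, 0, 0, 0, 0, 0, 0, 0, 0, 0, 0, 1, 1, 1, 1, 1, 1, 1, 1, 1, 1, 1, 1, 1, 1, 1, 1, 1, 1, 1, 1, 1, 1, 1, 1, 1, 1, 1, 1, 1, 1, 1, 1, 1, 1, 1, 1, 1, 1, 0, 0, 0, 0, 0, 2, 2, 2, 2, 2, 2, 2, 2, 2, 2, 2, 2, 2, 2, 2, 2, 2, 2, 2, 2, 2, 2, 2, 2, 2, 2, 2, 2, 2, 2, 2, 2, 2, 2, 2, 2, 2, 2, 2, 2, 2, 2, 2, 2, 2, 2, 2, 2, 2, 2, 2, 2, 2, 2, 2, 2, 2, 2, 2, 2, 2, 2, 2, 2, 2, 2,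 2, 2, 2, 2, 2, 2, 2, 2, 2, 0, 0, 1, 1, 1, 1, 1, 1, 1, 1, 1, 1, 1, 1, 1, 1, 1, 1, 1, 1, 1, 1, 1, 1, 1, 1, 1, 1, 1, 1, 1, 1, 0, 0, 3, 3, 3, 3, 3, 3, 3, 3, 3, 3, 3, 3, 3, 3, 3, 3, 3, 3, 3, 3, 3, 3, 3, 3, 3, 3, 3, 3, 3, 3, 3, 3, 3, 3, 3, 3, 3, 3, 3, 3, 3, 3, 3, 3, 3, 3, 3, 3, 3, 3, 3, 3, 3, 3, 3, 3, 3, 3, 3, 3, 3, 3, 3, 3, 3, 3, 3, 3, 3, 3, 3, 3, 3, 3, 3, 3, 3, 3, 3, 3, 3, 3, 3, 3, 3, 3, 3, 3, 3, 3, 3, 3, 3, 3, 3, 3, 3, 3, 3, 3, 3, 3, 3, 3, 3, 3, 3, 3, 3, 3, 3, 3, 3, 3, 3, 3, 3, 3, 3, 3, 3, 3, 3, 3, 3, 3, 3, 3, 3, 3, 3, 3, 3, 3, 3, 3, 3, 3, 3, 3, 3, 3, 3, 3, 3, 3, 3, 3, 3, 3, 3, 3, 3, 3, 3, 3, 3, 3, 3, 3, 3, 3, 3, 3, 3, 3, 3, 3, 3, 3, 3, 3, 3, 3, 3, 3, 3, 3, 3, 3, 3, 3, 0, 1, 1, 1, 1, 1, 1, 1, 1, 1, 1, 1, 1, 1, 1, 1, 1, 1, 1, 1, 1, 1, 1, 1, 1, 1, 1, 1, 1, 1, 0, 2, 2, 2, 2, 2, 2, 2, 2, 2, 2, 2,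 2, 2, 2, 2, 2, 2, 2, 2, 2, 2, 2, 2, 2, 2, 2, 2, 2, 2, 2, 2, 2, 2, 2, 2, 2, 2, 2, 2, 2, 2, 2, 2, 2, 2, 2, 2, 2, 2, 2, 2, 2, 2, 2, 2, 2, 2, 2, 2, 2, 2, 2, 2, 2, 2, 2, 2, 2, 2, 2, 2, 2, 0, 1, 1, 1, 1, 1, 1, 1, 1, 1, 1, 1, 1, 1, 1, 1, 1, 1, 1, 1, 1, 1, 1, 1, 1, 1, 1, 1, 1, 1, 0]"

lemma go3: "go gl3 gl3 = 134" by (simp only: gl3_def; code_simp)
lemma go4: "go gl4 gl4 = 992" by (simp only: gl4_def; code_simp)

lemma cnt_sum:
  "length xs \<le> N \<Longrightarrow> cnt c xs ys =
    (\<Sum>i<N. if i < length xs \<and> i < length ys \<and> xs!i = c \<and> ys!i = c then 1 else 0)"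
proof (induction xs arbitrary: ys N)
  case Nil
  then show ?case by simp
next
  case (Cons u us)
  then obtain N' where N: "N = Suc N'" by (cases N) auto
  show ?case
  proof (cases ys)
    case Nil
    then show ?thesis by simp
  next
    case (Cons v vs)
    have ih: "cnt c us vs = (\<Sum>i<N'. if i < length us \<and> i < length vs \<and> us!i = c \<and> vs!i = c then 1 else 0)"
      using Cons.IH[of N' vs] Cons.prems N by simp
    show ?thesis unfolding N sum.lessThan_Suc_shift using ih Cons by simp
  qed
qed

lemma go_sum:
  "k \<le> length full \<Longrightarrow> go full (drop k full) =
    (\<Sum>a\<in>{k..<length full}. cnt (full!a) full (drop a full) + cnt (full!a) full (drop (Suc a) full))"
proof (induction "length full - k" arbitrary: k)
  case 0
  then show ?case by simp
next
  case (Suc d)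
  then have k: "k < length full" by simp
  have dr: "drop k full = full!k # drop (Suc k) full" using k by (simp add: Cons_nth_drop_Suc)
  have ih: "go full (drop (Suc k) full) =
    (\<Sum>a\<in>{Suc k..<length full}. cnt (full!a) full (drop a full) + cnt (full!a) full (drop (Suc a) full))"
    using Suc k by simp
  show ?case unfolding sum.atLeast_Suc_lessThan[OF k] using dr ih
    by (metis add.assoc go.simps(2))
qed

definition wA :: "nat list \<Rightarrow> nat \<Rightarrow> nat \<Rightarrow> nat \<Rightarrow> nat" where
  "wA gl m a b = (if a+b < m \<and> gl!a = gl!b \<and> gl!b = gl!(a+b) then 1 else 0)"
definition wB :: "nat list \<Rightarrow> nat \<Rightarrow> nat \<Rightarrow> nat \<Rightarrow> nat" where
  "wB gl m a b = (if a+b+1 < m \<and> gl!a = gl!b \<and> gl!b = gl!(a+b+1) then 1 else 0)"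

lemma W_go:
  assumes "length gl = m"
  shows "(\<Sum>a<m. \<Sum>b<m. wA gl m a b + wB gl m a b) = go gl gl"
proof -
  have "go gl gl = go gl (drop 0 gl)" by simp
  also have "\<dots> = (\<Sum>a\<in>{0..<m}. cnt (gl!a) gl (drop a gl) + cnt (gl!a) gl (drop (Suc a) gl))"
    using go_sum[of 0 gl] assms by simp
  also have "\<dots> = (\<Sum>a<m. \<Sum>b<m. wA gl m a b + wB gl m a b)"
  proof (rule sum.cong)
    show "{0..<m} = {..<m}" by auto
  next
    fix a assume a: "a \<in> {..<m}"
    have cs: "\<And>c ys. cnt c gl ys = (\<Sum>i<m. if i < length gl \<and> i < length ys \<and> gl!i = c \<and> ys!i = c then 1 else 0)"
      using cnt_sum[of gl m] assms by simp
    have A: "cnt (gl!a) gl (drop a gl) = (\<Sum>b<m. wA gl m a b)"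
      unfolding cs
    proof (rule sum.cong)
      fix b assume "b \<in> {..<m}"
      then show "(if b < length gl \<and> b < length (drop a gl) \<and> gl ! b = gl ! a \<and> drop a gl ! b = gl ! a then 1 else 0) = wA gl m a b"
        using assms a by (auto simp: wA_def)
    qed simp
    have B: "cnt (gl!a) gl (drop (Suc a) gl) = (\<Sum>b<m. wB gl m a b)"
      unfolding cs
    proof (rule sum.cong)
      fix b assume "b \<in> {..<m}"
      then show "(if b < length gl \<and> b < length (drop (Suc a) gl) \<and> gl ! b = gl ! a \<and> drop (Suc a) gl ! b = gl ! a then 1 else 0) = wB gl m a b"
        using assms a by (auto simp: wB_def add.commute)
    qed simp
    show "cnt (gl!a) gl (drop a gl) + cnt (gl!a) gl (drop (Suc a) gl) = (\<Sum>b<m. wA gl m a b + wB gl m a b)"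
      using A B by (simp add: sum.distrib)
  qed
  finally show ?thesis by simp
qed

lemma divh: "r < (q::nat) \<Longrightarrow> (c*q + r) div q = c"
  by simp

lemma modh: "r < (q::nat) \<Longrightarrow> (c*q + r) mod q = r"
  by simp

lemma gauss2: "2 * (\<Sum>i<q. Suc i) = q * (q + 1)"
  by (induction q) auto

lemma cardG: "2 * card {(i,j). i<q \<and> j<q \<and> q \<le> i+j+1} = q*(q+1)"
proof -
  have "{(i,j). i<q \<and> j<q \<and> q \<le> i+j+1} = Sigma {..<q} (\<lambda>i. {q - Suc i..<q})"
    by auto
  then have "card {(i,j). i<q \<and> j<q \<and> q \<le> i+j+1} = (\<Sum>i<q. card {q - Suc i..<q})"
    by (simp add: card_SigmaI)
  also have "\<dots> = (\<Sum>i<q. Suc i)" by (rule sum.cong) auto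
  finally show ?thesis using gauss2 by simp
qed

lemma cardLG: "card {(i,j). i<q \<and> j<q \<and> i+j+1 < (q::nat)} + card {(i,j). i<q \<and> j<q \<and> q \<le> i+j+1} = q*q"
proof -
  have "card {(i,j). i<q \<and> j<q \<and> i+j+1 < (q::nat)} + card {(i,j). i<q \<and> j<q \<and> q \<le> i+j+1}
     = card ({(i,j). i<q \<and> j<q \<and> i+j+1 < (q::nat)} \<union> {(i,j). i<q \<and> j<q \<and> q \<le> i+j+1})"
    by (rule card_Un_disjoint[symmetric])
       (auto intro: finite_subset[of _ "{..<q}\<times>{..<q}"])
  also have "({(i,j). i<q \<and> j<q \<and> i+j+1 < (q::nat)} \<union> {(i,j). i<q \<and> j<q \<and> q \<le> i+j+1}) = {..<q}\<times>{..<q}"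
    by auto
  finally show ?thesis by simp
qed


definition PP :: "nat list \<Rightarrow> nat \<Rightarrow> nat \<Rightarrow> nat \<Rightarrow> nat \<Rightarrow> nat \<Rightarrow> nat \<Rightarrow> bool" where
  "PP gl m q a b i j \<longleftrightarrow>
     (i+j+1 < q \<and> a+b < m \<and> gl!a = gl!b \<and> gl!b = gl!(a+b)) \<or>
     (q \<le> i+j+1 \<and> a+b+1 < m \<and> gl!a = gl!b \<and> gl!b = gl!(a+b+1))"

lemma dlt: "1 \<le> (x::nat) \<Longrightarrow> x \<le> m*q \<Longrightarrow> (x-1) div q < m"
proof -
  assume "1 \<le> x" "x \<le> m*q"
  then have "x - 1 < m*q" by linarith
  then show ?thesis by (rule less_mult_imp_div_less)
qed

lemma E_bound:
  "2 * card {(i,j). i<q \<and> j<q \<and> PP gl m q a b i j} \<le> (wA gl m a b + wB gl m a b) * q^2 + q"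
proof -
  let ?E = "{(i,j). i<q \<and> j<q \<and> PP gl m q a b i j}"
  let ?L = "{(i,j). i<q \<and> j<q \<and> i+j+1 < (q::nat)}"
  let ?G = "{(i,j). i<q \<and> j<q \<and> q \<le> i+j+1}"
  let ?A = "a+b < m \<and> gl!a = gl!b \<and> gl!b = gl!(a+b)"
  let ?B = "a+b+1 < m \<and> gl!a = gl!b \<and> gl!b = gl!(a+b+1)"
  have fL: "finite ?L" by (rule finite_subset[of _ "{..<q}\<times>{..<q}"]) auto
  have fG: "finite ?G" by (rule finite_subset[of _ "{..<q}\<times>{..<q}"]) auto
  have G: "2 * card ?G = q*(q+1)" by (rule cardG)
  have LG: "card ?L + card ?G = q*q" by (rule cardLG)
  have sq: "q^2 = q*q" by (simp add: power2_eq_square)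
  consider "?A \<and> ?B" | "?A \<and> \<not> ?B" | "\<not> ?A \<and> ?B" | "\<not> ?A \<and> \<not> ?B" by blast
  then show ?thesis
  proof cases
    case 1
    have "card ?E \<le> card ({..<q}\<times>{..<q})" by (rule card_mono) auto
    then show ?thesis using 1 by (simp add: wA_def wB_def sq)
  next
    case 2
    have "card ?E \<le> card ?L" by (rule card_mono[OF fL]) (use 2 in \<open>auto simp: PP_def\<close>)
    then show ?thesis using 2 G LG by (simp add: wA_def wB_def sq)
  next
    case 3
    have "card ?E \<le> card ?G" by (rule card_mono[OF fG]) (use 3 in \<open>auto simp: PP_def\<close>)
    then show ?thesis using 3 G LG by (simp add: wA_def wB_def sq algebra_simps)
  next
    case 4
    have "?E = {}" using 4 by (auto simp: PP_def)
    then have "card ?E = 0" by (simp only: card.empty)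
    then show ?thesis by simp
  qed
qed

lemma count_bound:
  assumes len: "length gl = m" and q: "0 < q"
  shows "2 * mono_schur_count (m*q) (\<lambda>x. gl ! ((x-1) div q)) \<le> go gl gl * q^2 + m^2*q"
proof -
  define n where "n = m*q"
  define chi where "chi = (\<lambda>x. gl ! ((x-1) div q))"
  define T where "T = {(x, y, z). x \<in> {1..n} \<and> y \<in> {1..n} \<and> z \<in> {1..n}
      \<and> x + y = z \<and> chi x = chi y \<and> chi y = chi z}"
  define S where "S = {(x, y). x \<in> {1..n} \<and> y \<in> {1..n} \<and> x + y \<in> {1..n}
      \<and> chi x = chi y \<and> chi y = chi (x+y)}"
  define E where "E = (\<lambda>(a,b). {(i,j). i<q \<and> j<q \<and> PP gl m q a b i j})"
  define D where "D = Sigma ({..<m}\<times>{..<m}) E"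
  define f where "f = (\<lambda>((a::nat,b::nat),(i::nat,j::nat)). (a*q+i+1, b*q+j+1))"
  have finE: "\<And>p. finite (E p)"
    by (auto simp: E_def split: prod.splits intro: finite_subset[of _ "{..<q}\<times>{..<q}"])
  have "T \<subseteq> (\<lambda>(x,y). (x,y,x+y)) ` S" unfolding T_def S_def by auto
  moreover have finS: "finite S"
    by (rule finite_subset[of _ "{1..n}\<times>{1..n}"]) (auto simp: S_def)
  ultimately have c1: "card T \<le> card S"
    using card_mono[OF finite_imageI[OF finS]] card_image_le[OF finS] le_trans by blast
  have "S \<subseteq> f ` D"
  proof
    fix p assume "p \<in> S"
    then obtain x y where p: "p = (x,y)" and x: "x \<in> {1..n}" and y: "y \<in> {1..n}"
      and z: "x+y \<in> {1..n}" and c: "chi x = chi y" "chi y = chi (x+y)"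
      unfolding S_def by auto
    define a where "a = (x-1) div q"
    define i where "i = (x-1) mod q"
    define b where "b = (y-1) div q"
    define j where "j = (y-1) mod q"
    have xe: "x = a*q+i+1" using x unfolding a_def i_def by (simp add: div_mult_mod_eq)
    have ye: "y = b*q+j+1" using y unfolding b_def j_def by (simp add: div_mult_mod_eq)
    have iq: "i < q" "j < q" using q by (auto simp: i_def j_def)
    have am: "a < m" using x dlt unfolding a_def n_def by simp
    have bm: "b < m" using y dlt unfolding b_def n_def by simp
    have zl: "(x+y-1) div q < m" using z dlt unfolding n_def by simp
    have ca: "chi x = gl!a" unfolding chi_def a_def ..
    have cb: "chi y = gl!b" unfolding chi_def b_def ..
    have cz: "chi (x+y) = gl!((x+y-1) div q)" unfolding chi_def ..
    have P: "PP gl m q a b i j"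
    proof (cases "i+j+1 < q")
      case True
      have "x+y-1 = (a+b)*q + (i+j+1)" using xe ye by (simp add: algebra_simps)
      then have "(x+y-1) div q = a+b" using divh[OF True] by simp
      then show ?thesis using True zl c ca cb cz by (simp add: PP_def)
    next
      case False
      have "x+y-1 = (a+b+1)*q + (i+j+1-q)" using xe ye False by (simp add: algebra_simps)
      moreover have "i+j+1-q < q" using iq by simp
      ultimately have "(x+y-1) div q = a+b+1" using divh[of "i+j+1-q" q "a+b+1"] by presburger
      then show ?thesis using False zl c ca cb cz by (simp add: PP_def)
    qed
    have "((a,b),(i,j)) \<in> D" using am bm iq P unfolding D_def E_def by simp
    moreover have "p = f ((a,b),(i,j))" using p xe ye unfolding f_def by simp
    ultimately show "p \<in> f ` D" by blast
  qed
  moreover have finD: "finite D" unfolding D_def using finE by simp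
  ultimately have c2: "card S \<le> card D" by (meson card_image_le card_mono finite_imageI order_trans)
  have cD: "card D = (\<Sum>p\<in>{..<m}\<times>{..<m}. card (E p))"
    unfolding D_def using finE by (simp add: card_SigmaI)
  have "2 * card D = (\<Sum>p\<in>{..<m}\<times>{..<m}. 2 * card (E p))"
    unfolding cD by (simp add: sum_distrib_left)
  also have "\<dots> \<le> (\<Sum>p\<in>{..<m}\<times>{..<m}. (wA gl m (fst p) (snd p) + wB gl m (fst p) (snd p)) * q^2 + q)"
    by (rule sum_mono) (auto simp: E_def E_bound)
  also have "\<dots> = (\<Sum>p\<in>{..<m}\<times>{..<m}. (wA gl m (fst p) (snd p) + wB gl m (fst p) (snd p))) * q^2 + m^2*q"
    by (simp add: sum.distrib sum_distrib_right[symmetric] power2_eq_square)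
  also have "(\<Sum>p\<in>{..<m}\<times>{..<m}. (wA gl m (fst p) (snd p) + wB gl m (fst p) (snd p)))
      = (\<Sum>a<m. \<Sum>b<m. wA gl m a b + wB gl m a b)"
    by (simp add: sum.cartesian_product split_beta)
  also have "\<dots> = go gl gl" by (rule W_go[OF len])
  finally have "2 * card D \<le> go gl gl * q^2 + m^2*q" .
  moreover have "mono_schur_count (m*q) (\<lambda>x. gl ! ((x-1) div q)) = card T"
    unfolding mono_schur_count_def T_def n_def chi_def ..
  ultimately show ?thesis using c1 c2 by linarith
qed


lemma count_mono:
  assumes "n \<le> n'"
  shows "mono_schur_count n chi \<le> mono_schur_count n' chi"
  unfolding mono_schur_count_def
proof (rule card_mono)
  show "finite {(x, y, z). x \<in> {1..n'} \<and> y \<in> {1..n'} \<and> z \<in> {1..n'} \<and> x + y = z \<and> chi x = chi y \<and> chi y = chi z}"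
    by (rule finite_subset[of _ "{1..n'}\<times>{1..n'}\<times>{1..n'}"]) auto
  show "{(x, y, z). x \<in> {1..n} \<and> y \<in> {1..n} \<and> z \<in> {1..n} \<and> x + y = z \<and> chi x = chi y \<and> chi y = chi z}
    \<subseteq> {(x, y, z). x \<in> {1..n'} \<and> y \<in> {1..n'} \<and> z \<in> {1..n'} \<and> x + y = z \<and> chi x = chi y \<and> chi y = chi z}"
    using assms by auto
qed

lemma M_le: "is_coloring n k chi \<Longrightarrow> M_Schur n k \<le> mono_schur_count n chi"
  unfolding M_Schur_def by (rule Least_le) blast

lemma arith_final:
  fixes X m q n :: nat
  assumes X: "2 * X \<le> 2*m * q^2 + m^2 * q" and m: "0 < m" "m \<le> 496"
    and mq: "m*q \<le> n + m" and n: "0 < n"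
  shows "real X \<le> real n ^ 2 / real m + 1000000 * real n"
proof -
  define t where "t = real m * real q"
  have t0: "0 \<le> t" unfolding t_def by simp
  have tn: "t \<le> real n + real m" unfolding t_def using mq
    by (metis of_nat_add of_nat_le_iff of_nat_mult)
  have mr: "real m > 0" "real m \<le> 496" using m by auto
  have nr: "real n \<ge> 1" using n by simp
  have "2 * real X \<le> 2 * real m * real q ^ 2 + real m ^ 2 * real q"
    using X by (metis (mono_tags, lifting) of_nat_add of_nat_le_iff of_nat_mult of_nat_numeral of_nat_power)
  also have "2 * real m * real q ^ 2 = 2 * t^2 / real m" unfolding t_def using mr
    by (simp add: power2_eq_square field_simps)
  also have "real m ^ 2 * real q = real m * t" unfolding t_def by (simp add: power2_eq_square)
  finally have X1: "real X \<le> t^2 / real m + real m * t / 2" by simp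
  have "t^2 \<le> (real n + real m)^2" using t0 tn by (simp add: power_mono)
  then have "t^2 / real m \<le> (real n + real m)^2 / real m" using mr by (simp add: divide_right_mono)
  also have "(real n + real m)^2 / real m = real n ^2 / real m + 2 * real n + real m"
    using mr by (simp add: power2_eq_square field_simps)
  finally have A: "t^2 / real m \<le> real n ^2 / real m + 2 * real n + real m" .
  have B: "real m * t / 2 \<le> real m * (real n + real m) / 2" using tn mr by simp
  have C1: "real m \<le> 496 * real n" using mr nr by linarith
  have C2: "real m * real n \<le> 496 * real n" using mr nr by (simp add: mult_right_mono)
  have C3: "real m * real m \<le> 496 * 496 * real n"
  proof -
    have "real m * real m \<le> 496 * 496" using mult_mono[of "real m" 496 "real m" 496] mr by simp
    also have "\<dots> \<le> 496 * 496 * real n" using nr by simp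
    finally show ?thesis .
  qed
  have B2: "real m * t / 2 \<le> (real m * real n + real m * real m) / 2"
    using B by (simp add: algebra_simps)
  have "real X \<le> real n ^2 / real m + 2 * real n + real m + (real m * real n + real m * real m) / 2"
    using X1 A B2 by linarith
  also have "\<dots> \<le> real n ^2 / real m + 1000000 * real n"
  proof -
    have "real m * real n + real m * real m \<le> 496 * real n + 496 * 496 * real n"
      using C2 C3 by (intro add_mono) auto
    then have "(real m * real n + real m * real m) / 2 \<le> 123256 * real n" by simp
    then show ?thesis using C1 nr by linarith
  qed
  finally show ?thesis .
qed

lemma main_bound:
  assumes len: "length gl = m" and m: "0 < m" "m \<le> 496" and W: "go gl gl = 2*m"
    and col: "\<forall>c\<in>set gl. c < k" and n: "0 < n"
  shows "real (M_Schur n k) \<le> real n ^ 2 / real m + 1000000 * real n"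
proof -
  define q where "q = (n + m - 1) div m"
  have dm: "m * q + (n + m - 1) mod m = n + m - 1" unfolding q_def by (simp add: mult_div_mod_eq)
  have md: "(n + m - 1) mod m < m" using m by simp
  have nq: "n \<le> m*q" using dm md by linarith
  have mq: "m*q \<le> n + m" using dm by linarith
  have q: "0 < q" using nq n by (cases q) auto
  define chi where "chi = (\<lambda>x. gl ! ((x-1) div q))"
  have isc: "is_coloring n k chi"
    unfolding is_coloring_def chi_def
  proof
    fix x assume "x \<in> {1..n}"
    then have "(x-1) div q < m" using dlt[of x m q] nq by simp
    then show "gl ! ((x-1) div q) < k" using col len by simp
  qed
  have "M_Schur n k \<le> mono_schur_count n chi" by (rule M_le[OF isc])
  also have "\<dots> \<le> mono_schur_count (m*q) chi" by (rule count_mono[OF nq])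
  finally have X: "M_Schur n k \<le> mono_schur_count (m*q) chi" .
  have "2 * mono_schur_count (m*q) chi \<le> go gl gl * q^2 + m^2*q"
    unfolding chi_def by (rule count_bound[OF len q])
  then have "2 * M_Schur n k \<le> 2*m * q^2 + m^2 * q" using X W by simp
  then show ?thesis by (rule arith_final[OF _ m mq n])
qed

theorem theorem7:
  shows "\<exists>C::real. \<forall>n::nat. n > 0 \<longrightarrow>
     real (M_Schur n 3) \<le> real n ^ 2 / 67 + C * real n \<and>
     real (M_Schur n 4) \<le> real n ^ 2 / 496 + C * real n"
proof (intro exI allI impI conjI)
  fix n :: nat assume n: "0 < n"
  have l3: "length gl3 = 67" by (simp add: gl3_def)
  have l4: "length gl4 = 496" by (simp add: gl4_def)
  have c3: "\<forall>c\<in>set gl3. c < 3" by (simp add: gl3_def)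
  have c4: "\<forall>c\<in>set gl4. c < 4" by (simp add: gl4_def)
  show "real (M_Schur n 3) \<le> real n ^ 2 / 67 + 1000000 * real n"
    using main_bound[OF l3 _ _ _ c3 n] go3 by simp
  show "real (M_Schur n 4) \<le> real n ^ 2 / 496 + 1000000 * real n"
    using main_bound[OF l4 _ _ _ c4 n] go4 by simp
qed

end
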